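(* Let $\mathbb K$ be a field of characteristic zero and $A=\bigoplus_{i=1}^k M_{d_i}(\mathbb K)$. Let $\epsilon_0:=\bigoplus_i d_i\mathrm{Tr}_{M_{d_i}}$ (the Frobenius linear form of the unique symmetric special Frobenius structure on $A$) and, for an invertible $u=\bigoplus_i u_i\in A$, consider the twisted Frobenius structure $(a,b)_u:=\epsilon_0(uab)$. Then its F-dimension and F-Hilbert series are $$\dim_1(A)=\sum_{i=1}^k\mathrm{Tr}(u_i)\mathrm{Tr}(u_i^{-1}),\qquad \dim_x(A)=\sum_{i=1}^k\frac{d_i\mathrm{Tr}(u_i)}{1-d_i^{-1}\mathrm{Tr}(u_i^{-1})x},$$ its counit scale factor is $\dim_0(A)=\sum_i d_i\mathrm{Tr}(u_i)$, and it is quasispecial with scale factor $\lambda$ if and only if $\mathrm{Tr}(u_i^{-1})/d_i=\lambda$ for all $i$.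
   Context: A Frobenius algebra is a unital $\mathbb K$-algebra $A$ with a bilinear form $(\ ,\ )$ satisfying $(ab,c)=(a,bc)$ whose induced map $A\to A^*$ is invertible; its inverse is $g=\sum g^1\otimes g^2\in A\otimes A$ with $\sum (a,g^1)g^2=a=\sum g^1(g^2,a)$. Write $\epsilon(a):=(1,a)$ and $\ell:=\sum g^1g^2$. F-dimensions: $\dim_j(A):=\epsilon(\ell^j)$, $\dim_x(A):=\sum_{j\ge0}x^j\dim_j(A)$ (formal power series). Quasispecial with scale factor $\lambda$ means $\ell=\lambda1$ with $\lambda\ne0$; special means $\ell=1$. *)

theory Defs
  imports "Jordan_Normal_Form.Matrix" "HOL-Computational_Algebra.Formal_Power_Series"
begin

definition mat_tr :: "'a::comm_ring_1 mat \<Rightarrow> 'a" where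
  "mat_tr M = (\<Sum>i<dim_row M. M $$ (i, i))"

text \<open>The algebra A = M_{d_1}(K) (+) ... (+) M_{d_k}(K), with ds = [d_1,...,d_k];
  elements are lists of matrices [a_1,...,a_k] with a_i a d_i x d_i matrix.\<close>
definition blk_carrier :: "nat list \<Rightarrow> 'a::comm_ring_1 mat list set" where
  "blk_carrier ds = {a. length a = length ds \<and>
      (\<forall>i<length ds. a ! i \<in> carrier_mat (ds ! i) (ds ! i))}"

definition blk_mult :: "'a::comm_ring_1 mat list \<Rightarrow> 'a mat list \<Rightarrow> 'a mat list" where
  "blk_mult a b = map2 (*) a b"

definition blk_add :: "'a::comm_ring_1 mat list \<Rightarrow> 'a mat list \<Rightarrow> 'a mat list" where
  "blk_add a b = map2 (+) a b"

definition blk_smult :: "'a::comm_ring_1 \<Rightarrow> 'a mat list \<Rightarrow> 'a mat list" where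
  "blk_smult c a = map (\<lambda>m. c \<cdot>\<^sub>m m) a"

definition blk_zero :: "nat list \<Rightarrow> 'a::comm_ring_1 mat list" where
  "blk_zero ds = map (\<lambda>d. 0\<^sub>m d d) ds"

definition blk_one :: "nat list \<Rightarrow> 'a::comm_ring_1 mat list" where
  "blk_one ds = map (\<lambda>d. 1\<^sub>m d) ds"

definition blk_sum :: "nat list \<Rightarrow> 'a::comm_ring_1 mat list list \<Rightarrow> 'a mat list" where
  "blk_sum ds xs = foldr blk_add xs (blk_zero ds)"

definition blk_pow :: "nat list \<Rightarrow> 'a::comm_ring_1 mat list \<Rightarrow> nat \<Rightarrow> 'a mat list" where
  "blk_pow ds a j = ((blk_mult a) ^^ j) (blk_one ds)"

definition eps0 :: "nat list \<Rightarrow> 'a::comm_ring_1 mat list \<Rightarrow> 'a" where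
  "eps0 ds a = (\<Sum>i<length ds. of_nat (ds ! i) * mat_tr (a ! i))"

definition twisted_form :: "nat list \<Rightarrow> 'a::comm_ring_1 mat list \<Rightarrow>
    'a mat list \<Rightarrow> 'a mat list \<Rightarrow> 'a" where
  "twisted_form ds u a b = eps0 ds (blk_mult u (blk_mult a b))"

text \<open>A copairing g = sum_j x_j (x) y_j in A (x) A (given as a finite list of pairs)
  inverting the form B: sum (a,g^1) g^2 = a = sum g^1 (g^2,a) for all a in A.\<close>
definition is_copairing :: "nat list \<Rightarrow> ('a::comm_ring_1 mat list \<Rightarrow> 'a mat list \<Rightarrow> 'a) \<Rightarrow>
    ('a mat list \<times> 'a mat list) list \<Rightarrow> bool" where
  "is_copairing ds B g \<longleftrightarrow>
     (\<forall>(x, y) \<in> set g. x \<in> blk_carrier ds \<and> y \<in> blk_carrier ds) \<and>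
     (\<forall>a \<in> blk_carrier ds.
        blk_sum ds (map (\<lambda>(x, y). blk_smult (B a x) y) g) = a \<and>
        blk_sum ds (map (\<lambda>(x, y). blk_smult (B y a) x) g) = a)"

definition copairing_ell :: "nat list \<Rightarrow> ('a::comm_ring_1 mat list \<times> 'a mat list) list \<Rightarrow> 'a mat list" where
  "copairing_ell ds g = blk_sum ds (map (\<lambda>(x, y). blk_mult x y) g)"

definition F_dim :: "nat list \<Rightarrow> ('a::comm_ring_1 mat list \<Rightarrow> 'a mat list \<Rightarrow> 'a) \<Rightarrow>
    ('a mat list \<times> 'a mat list) list \<Rightarrow> nat \<Rightarrow> 'a" where
  "F_dim ds B g j = B (blk_one ds) (blk_pow ds (copairing_ell ds g) j)"

definition F_hilbert :: "nat list \<Rightarrow> ('a::comm_ring_1 mat list \<Rightarrow> 'a mat list \<Rightarrow> 'a) \<Rightarrow>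
    ('a mat list \<times> 'a mat list) list \<Rightarrow> 'a fps" where
  "F_hilbert ds B g = Abs_fps (F_dim ds B g)"

definition quasispecial :: "nat list \<Rightarrow> ('a::comm_ring_1 mat list \<times> 'a mat list) list \<Rightarrow> 'a \<Rightarrow> bool" where
  "quasispecial ds g lam \<longleftrightarrow> lam \<noteq> 0 \<and> copairing_ell ds g = blk_smult lam (blk_one ds)"

end

theory Submission
  imports Defs
begin

lemma fps_geom_inv:
  fixes c :: "'a::field"
  shows "inverse (1 - fps_const c * fps_X) = Abs_fps (\<lambda>n. c ^ n)"
proof (rule fps_inverse_unique)
  show "(1 - fps_const c * fps_X) * Abs_fps (\<lambda>n. c ^ n) = 1"
  proof (rule fps_ext)
    fix n show "fps_nth ((1 - fps_const c * fps_X) * Abs_fps (\<lambda>n. c ^ n)) n = fps_nth (1::'a fps) n"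
      by (cases n) (simp_all add: algebra_simps mult.assoc fps_X_mult_nth)
  qed
qed

lemma sum_list_concat': "sum_list (concat xss) = sum_list (map sum_list xss)"
  by (induction xss) auto

lemma map_upt_eq: "(map f [0..<length ds] = map g ds) \<longleftrightarrow> (\<forall>i<length ds. f i = g (ds!i))"
proof
  assume "map f [0..<length ds] = map g ds"
  then show "\<forall>i<length ds. f i = g (ds!i)"
    by (metis diff_zero length_upt nth_map nth_upt plus_nat.add_0)
next
  assume "\<forall>i<length ds. f i = g (ds!i)"
  then show "map f [0..<length ds] = map g ds"
    by (intro nth_equalityI) auto
qed

lemma sum_list_sum_swap: "(\<Sum>z\<leftarrow>xs. \<Sum>q\<in>A. F z q) = (\<Sum>q\<in>A. \<Sum>z\<leftarrow>xs. F z q)"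
  by (induction xs) (simp_all add: sum.distrib)

lemma double_delta: "s < n \<Longrightarrow> t < (n::nat) \<Longrightarrow>
  (\<Sum>p<n. \<Sum>q<n. if p = t then (if q = s then X else 0) else 0) = X"
proof -
  assume "s < n" "t < n"
  then have "(\<Sum>p<n. \<Sum>q<n. if p = t then (if q = s then X else 0) else 0) = (\<Sum>p<n. if p = t then X else 0)"
    by (intro sum.cong) auto
  also have "\<dots> = X" using \<open>t < n\<close> by simp
  finally show ?thesis .
qed

lemma double_delta2: "s < (n::nat) \<Longrightarrow>
  (\<Sum>p<n. \<Sum>q<m. if p = s then F q else 0) = (\<Sum>q<(m::nat). F q)"
proof -
  assume "s < n"
  have "(\<Sum>p<n. \<Sum>q<m. if p = s then F q else 0) = (\<Sum>p<n. if p = s then (\<Sum>q<m. F q) else 0)"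
    by (intro sum.cong) auto
  also have "\<dots> = (\<Sum>q<m. F q)" using \<open>s < n\<close> by simp
  finally show ?thesis .
qed

definition unitm :: "nat \<Rightarrow> nat \<Rightarrow> nat \<Rightarrow> 'a::comm_ring_1 mat" where
 "unitm n q p = mat n n (\<lambda>(r,t). if r = q \<and> t = p then 1 else 0)"

definition blkE :: "nat list \<Rightarrow> nat \<Rightarrow> 'a::comm_ring_1 mat \<Rightarrow> 'a mat list" where
 "blkE ds i M = map (\<lambda>j. if j = i then M else 0\<^sub>m (ds!j) (ds!j)) [0..<length ds]"

lemma blk_carrierI: "length a = length ds \<Longrightarrow> (\<And>i. i < length ds \<Longrightarrow> a ! i \<in> carrier_mat (ds!i) (ds!i)) \<Longrightarrow> a \<in> blk_carrier ds"
  by (auto simp: blk_carrier_def)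

lemma blk_carrierD: "a \<in> blk_carrier ds \<Longrightarrow> length a = length ds"
   "a \<in> blk_carrier ds \<Longrightarrow> i < length ds \<Longrightarrow> a ! i \<in> carrier_mat (ds!i) (ds!i)"
  by (auto simp: blk_carrier_def)

lemma blkE_carrier: "i < length ds \<Longrightarrow> M \<in> carrier_mat (ds!i) (ds!i) \<Longrightarrow> blkE ds i M \<in> blk_carrier ds"
  by (auto simp: blk_carrier_def blkE_def)

lemma blkE_nth: "j < length ds \<Longrightarrow> blkE ds i M ! j = (if j = i then M else 0\<^sub>m (ds!j) (ds!j))"
  by (simp add: blkE_def)

lemma blk_mult_carrier: "a \<in> blk_carrier ds \<Longrightarrow> b \<in> blk_carrier ds \<Longrightarrow> blk_mult a b \<in> blk_carrier ds"
  by (auto simp: blk_carrier_def blk_mult_def)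

lemma blk_mult_nth: "a \<in> blk_carrier ds \<Longrightarrow> b \<in> blk_carrier ds \<Longrightarrow> i < length ds \<Longrightarrow> blk_mult a b ! i = a ! i * b ! i"
  by (auto simp: blk_carrier_def blk_mult_def)

lemma blk_add_carrier: "a \<in> blk_carrier ds \<Longrightarrow> b \<in> blk_carrier ds \<Longrightarrow> blk_add a b \<in> blk_carrier ds"
  by (auto simp: blk_carrier_def blk_add_def)

lemma blk_add_nth: "a \<in> blk_carrier ds \<Longrightarrow> b \<in> blk_carrier ds \<Longrightarrow> i < length ds \<Longrightarrow> blk_add a b ! i = a ! i + b ! i"
  by (auto simp: blk_carrier_def blk_add_def)

lemma blk_smult_carrier: "a \<in> blk_carrier ds \<Longrightarrow> blk_smult c a \<in> blk_carrier ds"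
  by (auto simp: blk_carrier_def blk_smult_def)

lemma blk_smult_nth: "a \<in> blk_carrier ds \<Longrightarrow> i < length ds \<Longrightarrow> blk_smult c a ! i = c \<cdot>\<^sub>m (a ! i)"
  by (auto simp: blk_carrier_def blk_smult_def)

lemma blk_one_carrier: "blk_one ds \<in> blk_carrier ds"
  by (auto simp: blk_carrier_def blk_one_def)

lemma blk_one_nth: "i < length ds \<Longrightarrow> blk_one ds ! i = 1\<^sub>m (ds!i)"
  by (auto simp: blk_one_def)

lemma blk_zero_carrier: "blk_zero ds \<in> blk_carrier ds"
  by (auto simp: blk_carrier_def blk_zero_def)

lemma blk_zero_nth: "i < length ds \<Longrightarrow> blk_zero ds ! i = 0\<^sub>m (ds!i) (ds!i)"
  by (auto simp: blk_zero_def)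

lemma blk_sum_carrier_nth:
  assumes "set xs \<subseteq> blk_carrier ds"
  shows "blk_sum ds xs \<in> blk_carrier ds \<and> (\<forall>i<length ds. \<forall>p<ds!i. \<forall>r<ds!i.
     blk_sum ds xs ! i $$ (p,r) = (\<Sum>x\<leftarrow>xs. x!i $$ (p,r)))"
  using assms
proof (induction xs)
  case Nil
  then show ?case by (simp add: blk_sum_def blk_zero_carrier blk_zero_nth)
next
  case (Cons x xs)
  then have x: "x \<in> blk_carrier ds" and IH: "blk_sum ds xs \<in> blk_carrier ds \<and> (\<forall>i<length ds. \<forall>p<ds!i. \<forall>r<ds!i.
     blk_sum ds xs ! i $$ (p,r) = (\<Sum>x\<leftarrow>xs. x!i $$ (p,r)))" by auto
  have e: "blk_sum ds (x # xs) = blk_add x (blk_sum ds xs)" by (simp add: blk_sum_def)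
  have c: "blk_add x (blk_sum ds xs) \<in> blk_carrier ds" using IH x blk_add_carrier by blast
  have "blk_add x (blk_sum ds xs) ! i $$ (p,r) = (\<Sum>x\<leftarrow>x#xs. x!i $$ (p,r))"
    if "i<length ds" "p<ds!i" "r<ds!i" for i p r
    using IH that blk_add_nth[OF x, of "blk_sum ds xs" i] blk_carrierD(2)[OF x, of i]
      blk_carrierD(2)[of "blk_sum ds xs" ds i] by auto
  then show ?case unfolding e using c by auto
qed

lemma blk_eqI:
  assumes "a \<in> blk_carrier ds" "b \<in> blk_carrier ds"
    "\<And>i p r. i < length ds \<Longrightarrow> p < ds!i \<Longrightarrow> r < ds!i \<Longrightarrow> a!i $$ (p,r) = b!i $$ (p,r)"
  shows "a = b"
proof (rule nth_equalityI)
  show "length a = length b" using assms blk_carrierD by metis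
  fix i assume "i < length a"
  then have i: "i < length ds" using assms blk_carrierD by metis
  show "a ! i = b ! i"
    using blk_carrierD(2)[OF assms(1) i] blk_carrierD(2)[OF assms(2) i] assms(3)[OF i]
    by (intro eq_matI) auto
qed

lemma mat_tr_eq: "M \<in> carrier_mat n n \<Longrightarrow> mat_tr M = (\<Sum>r<n. M $$ (r,r))"
  by (simp add: mat_tr_def)

lemma mult_entry: "A \<in> carrier_mat n n \<Longrightarrow> B \<in> carrier_mat n n \<Longrightarrow> s < n \<Longrightarrow> t < n \<Longrightarrow>
   (A * B) $$ (s,t) = (\<Sum>q<n. A $$ (s,q) * B $$ (q,t))"
  by (simp add: scalar_prod_def atLeast0LessThan)

lemma mat_tr_comm: "A \<in> carrier_mat n n \<Longrightarrow> B \<in> carrier_mat n n \<Longrightarrow> mat_tr (A * B) = mat_tr (B * A)"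
proof -
  assume A: "A \<in> carrier_mat n n" and B: "B \<in> carrier_mat n n"
  have "mat_tr (A * B) = (\<Sum>r<n. \<Sum>q<n. A $$ (r,q) * B $$ (q,r))"
    using A B by (simp add: mat_tr_def scalar_prod_def atLeast0LessThan)
  also have "\<dots> = (\<Sum>q<n. \<Sum>r<n. B $$ (q,r) * A $$ (r,q))"
    by (subst sum.swap) (simp add: mult.commute)
  also have "\<dots> = mat_tr (B * A)"
    using A B by (simp add: mat_tr_def scalar_prod_def atLeast0LessThan)
  finally show ?thesis .
qed

lemma mat_tr_smult: "A \<in> carrier_mat n n \<Longrightarrow> mat_tr (c \<cdot>\<^sub>m A) = c * mat_tr A"
  by (simp add: mat_tr_eq[of _ n] sum_distrib_left)

lemma mat_tr_zero: "mat_tr (0\<^sub>m n n) = 0"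
  by (simp add: mat_tr_def)

lemma unitm_carrier[simp]: "unitm n q p \<in> carrier_mat n n"
  by (simp add: unitm_def)

lemma unitm_dims: "dim_row (unitm n q p) = n" "dim_col (unitm n q p) = n"
  by (simp_all add: unitm_def)

lemma unitm_index: "s < n \<Longrightarrow> t < n \<Longrightarrow> unitm n q p $$ (s,t) = (if s = q \<and> t = p then 1 else 0)"
  by (simp add: unitm_def)

lemma unitm_mult_entry: "M \<in> carrier_mat n n \<Longrightarrow> s < n \<Longrightarrow> t < n \<Longrightarrow> p < n \<Longrightarrow>
   (unitm n q p * M) $$ (s,t) = (if s = q then M $$ (p,t) else 0)"
  by (simp add: mult_entry[of _ n] unitm_index if_distrib[of "\<lambda>x. x * _"] cong: if_cong)

lemma mult_unitm_entry: "M \<in> carrier_mat n n \<Longrightarrow> s < n \<Longrightarrow> t < n \<Longrightarrow> q < n \<Longrightarrow>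
   (M * unitm n q p) $$ (s,t) = (if t = p then M $$ (s,q) else 0)"
  by (simp add: mult_entry[of _ n] unitm_index if_distrib[of "\<lambda>x. _ * x"] cong: if_cong)

lemma smult_mult_unitm_entry: "M \<in> carrier_mat n n \<Longrightarrow> s < n \<Longrightarrow> t < n \<Longrightarrow> q < n \<Longrightarrow>
   (c \<cdot>\<^sub>m (M * unitm n q p)) $$ (s,t) = c * (if t = p then M $$ (s,q) else 0)"
  using mult_unitm_entry[of M n s t q p] by (simp add: unitm_def)

lemma unitm_mult_smult_entry: "M \<in> carrier_mat n n \<Longrightarrow> s < n \<Longrightarrow> t < n \<Longrightarrow> p < n \<Longrightarrow>
   (c \<cdot>\<^sub>m (unitm n q p * M)) $$ (s,t) = c * (if s = q then M $$ (p,t) else 0)"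
  using unitm_mult_entry[of M n s t p q] by (simp add: unitm_def)

lemma unitm_mult_smult2_entry: "M \<in> carrier_mat n n \<Longrightarrow> s < n \<Longrightarrow> t < n \<Longrightarrow> p < n \<Longrightarrow>
   (k \<cdot>\<^sub>m (c \<cdot>\<^sub>m (unitm n q p * M))) $$ (s,t) = k * (c * (if s = q then M $$ (p,t) else 0))"
  using unitm_mult_smult_entry[of M n s t p c q] by (simp add: unitm_def)

lemma mat_tr_unitm: "M \<in> carrier_mat n n \<Longrightarrow> q < n \<Longrightarrow> p < n \<Longrightarrow> mat_tr (unitm n q p * M) = M $$ (p,q)"
proof -
  assume a: "M \<in> carrier_mat n n" "q < n" "p < n"
  have "mat_tr (unitm n q p * M) = (\<Sum>r<n. (unitm n q p * M) $$ (r,r))"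
    by (simp add: mat_tr_def unitm_def)
  also have "\<dots> = (\<Sum>r<n. if r = q then M $$ (p,r) else 0)"
    by (rule sum.cong) (use a in \<open>auto simp: unitm_mult_entry\<close>)
  also have "\<dots> = M $$ (p,q)" using a by simp
  finally show ?thesis .
qed

lemma smult_one_mult: "((a::'a::comm_ring_1) \<cdot>\<^sub>m 1\<^sub>m n) * (b \<cdot>\<^sub>m 1\<^sub>m n) = (a * b) \<cdot>\<^sub>m 1\<^sub>m n"
proof -
  have "((a::'a) \<cdot>\<^sub>m 1\<^sub>m n) * (b \<cdot>\<^sub>m 1\<^sub>m n) = a \<cdot>\<^sub>m (1\<^sub>m n * (b \<cdot>\<^sub>m 1\<^sub>m n))"
    by (rule mult_smult_assoc_mat[of _ n n _ n]) auto
  also have "1\<^sub>m n * (b \<cdot>\<^sub>m 1\<^sub>m n) = b \<cdot>\<^sub>m 1\<^sub>m n" by simp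
  also have "a \<cdot>\<^sub>m (b \<cdot>\<^sub>m 1\<^sub>m n) = (a * b) \<cdot>\<^sub>m (1\<^sub>m n :: 'a mat)"
    by (rule eq_matI) auto
  finally show ?thesis .
qed

lemma pow_diag: "blk_pow ds (map (\<lambda>i. (c i :: 'a::comm_ring_1) \<cdot>\<^sub>m 1\<^sub>m (ds!i)) [0..<length ds]) j
   = map (\<lambda>i. (c i ^ j) \<cdot>\<^sub>m 1\<^sub>m (ds!i)) [0..<length ds]"
proof (induction j)
  case 0
  show ?case unfolding blk_pow_def blk_one_def
    by (rule nth_equalityI) auto
next
  case (Suc j)
  have "blk_pow ds (map (\<lambda>i. c i \<cdot>\<^sub>m 1\<^sub>m (ds!i)) [0..<length ds]) (Suc j) =
     blk_mult (map (\<lambda>i. c i \<cdot>\<^sub>m 1\<^sub>m (ds!i)) [0..<length ds]) (blk_pow ds (map (\<lambda>i. c i \<cdot>\<^sub>m 1\<^sub>m (ds!i)) [0..<length ds]) j)"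
    unfolding blk_pow_def by simp
  also have "\<dots> = map (\<lambda>i. (c i ^ Suc j) \<cdot>\<^sub>m 1\<^sub>m (ds!i)) [0..<length ds]"
    unfolding Suc blk_mult_def
    by (rule nth_equalityI) (auto simp: smult_one_mult mult.commute)
  finally show ?case .
qed

definition cdg :: "nat list \<Rightarrow> 'a::field mat list \<Rightarrow> nat \<Rightarrow> 'a" where
  "cdg ds v i = mat_tr (v!i) / of_nat (ds!i)"

context
  fixes ds :: "nat list" and u v :: "'a::field_char_0 mat list"
  assumes pos: "\<forall>d \<in> set ds. 0 < d"
    and uC: "u \<in> blk_carrier ds" and vC: "v \<in> blk_carrier ds"
    and uv1: "blk_mult u v = blk_one ds" and vu1: "blk_mult v u = blk_one ds"
begin

lemma uv: "i < length ds \<Longrightarrow> u!i * v!i = 1\<^sub>m (ds!i)"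
  using arg_cong[OF uv1, of "\<lambda>x. x ! i"] blk_mult_nth[OF uC vC] blk_one_nth by metis

lemma vu: "i < length ds \<Longrightarrow> v!i * u!i = 1\<^sub>m (ds!i)"
  using arg_cong[OF vu1, of "\<lambda>x. x ! i"] blk_mult_nth[OF vC uC] blk_one_nth by metis

lemma uCi: "i < length ds \<Longrightarrow> u!i \<in> carrier_mat (ds!i) (ds!i)"
  using uC blk_carrierD by blast
lemma vCi: "i < length ds \<Longrightarrow> v!i \<in> carrier_mat (ds!i) (ds!i)"
  using vC blk_carrierD by blast

lemma dpos: "i < length ds \<Longrightarrow> (of_nat (ds!i) :: 'a) \<noteq> 0"
  using pos by auto

lemma tf_expand: "a \<in> blk_carrier ds \<Longrightarrow> b \<in> blk_carrier ds \<Longrightarrow>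
  twisted_form ds u a b = (\<Sum>j<length ds. of_nat (ds!j) * mat_tr (u!j * (a!j * b!j)))"
  unfolding twisted_form_def eps0_def
proof (rule sum.cong)
  fix j assume a: "a \<in> blk_carrier ds" and b: "b \<in> blk_carrier ds" and "j \<in> {..<length ds}"
  then have j: "j < length ds" by simp
  show "of_nat (ds!j) * mat_tr (blk_mult u (blk_mult a b) ! j) = of_nat (ds!j) * mat_tr (u!j * (a!j * b!j))"
    using blk_mult_nth[OF uC blk_mult_carrier[OF a b] j] blk_mult_nth[OF a b j] by simp
qed simp

lemma tf_left: assumes x: "x \<in> blk_carrier ds" and i: "i < length ds" and M: "M \<in> carrier_mat (ds!i) (ds!i)"
  shows "twisted_form ds u (blkE ds i M) x = of_nat (ds!i) * mat_tr (u!i * (M * x!i))"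
proof -
  have "twisted_form ds u (blkE ds i M) x = (\<Sum>j<length ds. if j = i then of_nat (ds!i) * mat_tr (u!i * (M * x!i)) else 0)"
    unfolding tf_expand[OF blkE_carrier[OF i M] x]
  proof (rule sum.cong)
    fix j assume "j \<in> {..<length ds}"
    then have j: "j < length ds" by simp
    have "u!j * (0\<^sub>m (ds!j) (ds!j) * x!j) = 0\<^sub>m (ds!j) (ds!j)"
      using uCi[OF j] blk_carrierD(2)[OF x j] by simp
    then show "of_nat (ds!j) * mat_tr (u!j * (blkE ds i M ! j * x!j)) = (if j = i then of_nat (ds!i) * mat_tr (u!i * (M * x!i)) else 0)"
      using j by (simp add: blkE_nth mat_tr_zero)
  qed simp
  also have "\<dots> = of_nat (ds!i) * mat_tr (u!i * (M * x!i))" using i by simp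
  finally show ?thesis .
qed

lemma tf_right: assumes x: "x \<in> blk_carrier ds" and i: "i < length ds" and M: "M \<in> carrier_mat (ds!i) (ds!i)"
  shows "twisted_form ds u x (blkE ds i M) = of_nat (ds!i) * mat_tr (u!i * (x!i * M))"
proof -
  have "twisted_form ds u x (blkE ds i M) = (\<Sum>j<length ds. if j = i then of_nat (ds!i) * mat_tr (u!i * (x!i * M)) else 0)"
    unfolding tf_expand[OF x blkE_carrier[OF i M]]
  proof (rule sum.cong)
    fix j assume "j \<in> {..<length ds}"
    then have j: "j < length ds" by simp
    have "u!j * (x!j * 0\<^sub>m (ds!j) (ds!j)) = 0\<^sub>m (ds!j) (ds!j)"
      using uCi[OF j] blk_carrierD(2)[OF x j] by simp
    then show "of_nat (ds!j) * mat_tr (u!j * (x!j * blkE ds i M ! j)) = (if j = i then of_nat (ds!i) * mat_tr (u!i * (x!i * M)) else 0)"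
      using j by (simp add: blkE_nth mat_tr_zero)
  qed simp
  also have "\<dots> = of_nat (ds!i) * mat_tr (u!i * (x!i * M))" using i by simp
  finally show ?thesis .
qed

definition hq :: "nat \<Rightarrow> nat \<Rightarrow> nat \<Rightarrow> 'a mat list" where
  "hq i q p = blkE ds i ((1 / of_nat (ds!i)) \<cdot>\<^sub>m (v!i * unitm (ds!i) q p))"

lemma hq_carrier: "i < length ds \<Longrightarrow> hq i q p \<in> blk_carrier ds"
  unfolding hq_def using mult_carrier_mat[OF vCi unitm_carrier] by (intro blkE_carrier) auto

lemma B_hq: assumes x: "x \<in> blk_carrier ds" and i: "i < length ds" and p: "p < ds!i" and q: "q < ds!i"
  shows "twisted_form ds u (hq i q p) x = x!i $$ (p,q)"
proof -
  let ?d = "ds!i" let ?c = "1 / (of_nat ?d :: 'a)" let ?E = "unitm ?d q p :: 'a mat"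
  have X: "x!i \<in> carrier_mat ?d ?d" using blk_carrierD(2)[OF x i] .
  note U = uCi[OF i] and V = vCi[OF i]
  have "u!i * ((?c \<cdot>\<^sub>m (v!i * ?E)) * x!i) = ?c \<cdot>\<^sub>m (u!i * (v!i * ?E * x!i))"
    using U V X mult_smult_distrib[OF U mult_carrier_mat[OF mult_carrier_mat[OF V unitm_carrier] X], of ?c]
    by (simp add: mult_smult_assoc_mat[of _ ?d ?d])
  also have "u!i * (v!i * ?E * x!i) = (u!i * v!i) * (?E * x!i)"
    using U V X by (simp add: assoc_mult_mat[of _ ?d ?d _ ?d _ ?d] assoc_mult_mat[OF U V mult_carrier_mat[OF unitm_carrier X]])
  also have "\<dots> = ?E * x!i" using uv[OF i] X left_mult_one_mat[OF mult_carrier_mat[OF unitm_carrier X]] by simp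
  finally have e: "u!i * ((?c \<cdot>\<^sub>m (v!i * ?E)) * x!i) = ?c \<cdot>\<^sub>m (?E * x!i)" .
  show ?thesis
    unfolding hq_def tf_left[OF x i smult_carrier_mat[OF mult_carrier_mat[OF V unitm_carrier]]] e
    using X p q dpos[OF i]
    by (simp add: mat_tr_smult[OF mult_carrier_mat[OF unitm_carrier X]] mat_tr_unitm)
qed

lemma ell_eq:
  assumes cp: "is_copairing ds (twisted_form ds u) g"
  shows "copairing_ell ds g = map (\<lambda>i. (mat_tr (v!i) / of_nat (ds!i)) \<cdot>\<^sub>m 1\<^sub>m (ds!i)) [0..<length ds]"
proof -
  have gC: "fst z \<in> blk_carrier ds" "snd z \<in> blk_carrier ds" if "z \<in> set g" for z
    using cp that unfolding is_copairing_def by auto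
  have id1: "blk_sum ds (map (\<lambda>z. blk_smult (twisted_form ds u a (fst z)) (snd z)) g) = a"
    if "a \<in> blk_carrier ds" for a
    using cp that unfolding is_copairing_def split_def by auto
  define L where "L = map (\<lambda>z. blk_mult (fst z) (snd z)) g"
  have LC: "set L \<subseteq> blk_carrier ds" unfolding L_def using gC by (auto intro!: blk_mult_carrier)
  have ellL: "copairing_ell ds g = blk_sum ds L" unfolding copairing_ell_def L_def split_def ..
  have RC: "map (\<lambda>i. (mat_tr (v!i) / of_nat (ds!i)) \<cdot>\<^sub>m 1\<^sub>m (ds!i)) [0..<length ds] \<in> blk_carrier ds"
    by (auto simp: blk_carrier_def)
  show ?thesis unfolding ellL
  proof (rule blk_eqI[OF conjunct1[OF blk_sum_carrier_nth[OF LC]] RC])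
    fix i p r assume i: "i < length ds" and p: "p < ds!i" and r: "r < ds!i"
    let ?d = "ds!i"
    have "blk_sum ds L ! i $$ (p,r) = (\<Sum>z\<leftarrow>g. (fst z ! i * snd z ! i) $$ (p,r))"
      using conjunct2[OF blk_sum_carrier_nth[OF LC]] i p r unfolding L_def
      by (simp add: o_def, intro arg_cong[where f=sum_list] map_cong[OF refl])
         (use i in \<open>simp add: blk_mult_nth[OF gC]\<close>)
    also have "\<dots> = (\<Sum>z\<leftarrow>g. \<Sum>q<?d. fst z ! i $$ (p,q) * snd z ! i $$ (q,r))"
      by (rule arg_cong[where f=sum_list], rule map_cong[OF refl])
         (use i p r in \<open>simp add: mult_entry[OF blk_carrierD(2)[OF gC(1) i] blk_carrierD(2)[OF gC(2) i]]\<close>)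
    also have "\<dots> = (\<Sum>q<?d. \<Sum>z\<leftarrow>g. fst z ! i $$ (p,q) * snd z ! i $$ (q,r))"
      by (rule sum_list_sum_swap)
    also have "\<dots> = (\<Sum>q<?d. hq i q p ! i $$ (q,r))"
    proof (rule sum.cong[OF refl])
      fix q assume "q \<in> {..<?d}" then have q: "q < ?d" by simp
      let ?W = "map (\<lambda>z. blk_smult (twisted_form ds u (hq i q p) (fst z)) (snd z)) g"
      have WC: "set ?W \<subseteq> blk_carrier ds" using gC by (auto intro!: blk_smult_carrier)
      have "hq i q p ! i $$ (q,r) = blk_sum ds ?W ! i $$ (q,r)" using id1[OF hq_carrier[OF i]] by simp
      also have "\<dots> = (\<Sum>w\<leftarrow>?W. w ! i $$ (q,r))" using conjunct2[OF blk_sum_carrier_nth[OF WC]] i q r by simp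
      also have "\<dots> = (\<Sum>z\<leftarrow>g. fst z ! i $$ (p,q) * snd z ! i $$ (q,r))"
        apply (simp add: o_def, rule arg_cong[where f=sum_list], rule map_cong[OF refl])
        subgoal for z
          using i p q r blk_carrierD(2)[OF gC(2)[of z] i]
          by (simp add: blk_smult_nth[OF gC(2) i] B_hq[OF gC(1) i p q])
        done
      finally show "(\<Sum>z\<leftarrow>g. fst z ! i $$ (p,q) * snd z ! i $$ (q,r)) = hq i q p ! i $$ (q,r)" ..
    qed
    also have "\<dots> = (\<Sum>q<?d. if r = p then v!i $$ (q,q) / of_nat ?d else 0)"
      by (rule sum.cong[OF refl]) (use i p r vCi[OF i] in \<open>auto simp: hq_def blkE_nth smult_mult_unitm_entry\<close>)
    also have "\<dots> = map (\<lambda>i. (mat_tr (v!i) / of_nat (ds!i)) \<cdot>\<^sub>m 1\<^sub>m (ds!i)) [0..<length ds] ! i $$ (p, r)"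
      using i p r vCi[OF i] by (simp add: mat_tr_eq[of _ ?d] sum_divide_distrib)
    finally show "blk_sum ds L ! i $$ (p,r) = map (\<lambda>i. (mat_tr (v!i) / of_nat (ds!i)) \<cdot>\<^sub>m 1\<^sub>m (ds!i)) [0..<length ds] ! i $$ (p, r)" .
  qed
qed

definition gx :: "nat \<Rightarrow> nat \<Rightarrow> nat \<Rightarrow> 'a mat list" where
  "gx i p q = blkE ds i ((1 / of_nat (ds!i)) \<cdot>\<^sub>m (unitm (ds!i) p q * v!i))"
definition gy :: "nat \<Rightarrow> nat \<Rightarrow> nat \<Rightarrow> 'a mat list" where
  "gy i p q = blkE ds i (unitm (ds!i) q p)"

lemma gx_carrier: "i < length ds \<Longrightarrow> gx i p q \<in> blk_carrier ds"
  unfolding gx_def using mult_carrier_mat[OF unitm_carrier vCi] by (intro blkE_carrier smult_carrier_mat) auto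
lemma gy_carrier: "i < length ds \<Longrightarrow> gy i p q \<in> blk_carrier ds"
  unfolding gy_def by (intro blkE_carrier) auto

lemma B_gx: assumes a: "a \<in> blk_carrier ds" and i: "i < length ds" and p: "p < ds!i" and q: "q < ds!i"
  shows "twisted_form ds u a (gx i p q) = a!i $$ (q,p)"
proof -
  let ?d = "ds!i" let ?c = "1 / (of_nat ?d :: 'a)" let ?E = "unitm ?d p q :: 'a mat"
  have A: "a!i \<in> carrier_mat ?d ?d" using blk_carrierD(2)[OF a i] .
  note U = uCi[OF i] and V = vCi[OF i] and E = unitm_carrier[of ?d p q]
  have EV: "?E * v!i \<in> carrier_mat ?d ?d" using mult_carrier_mat[OF E V] .
  have AEV: "a!i * (?E * v!i) \<in> carrier_mat ?d ?d" using mult_carrier_mat[OF A EV] .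
  have "u!i * (a!i * (?c \<cdot>\<^sub>m (?E * v!i))) = ?c \<cdot>\<^sub>m (u!i * (a!i * (?E * v!i)))"
    using mult_smult_distrib[OF A EV, of ?c] mult_smult_distrib[OF U AEV, of ?c] by simp
  moreover have "u!i * (a!i * (?E * v!i)) = (u!i * a!i * ?E) * v!i"
    using U A E V by (simp add: assoc_mult_mat[of _ ?d ?d _ ?d _ ?d])
  moreover have "mat_tr ((u!i * a!i * ?E) * v!i) = mat_tr (v!i * (u!i * a!i * ?E))"
    using mat_tr_comm[OF mult_carrier_mat[OF mult_carrier_mat[OF U A] E] V] .
  moreover have "v!i * (u!i * a!i * ?E) = (v!i * u!i) * (a!i * ?E)"
    using U A E V by (simp add: assoc_mult_mat[of _ ?d ?d _ ?d _ ?d])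
  moreover have "(v!i * u!i) * (a!i * ?E) = a!i * ?E"
    using vu[OF i] A E by simp
  moreover have "mat_tr (a!i * ?E) = mat_tr (?E * a!i)"
    using A E by (intro mat_tr_comm) auto
  moreover have "mat_tr (?E * a!i) = a!i $$ (q,p)"
    using A p q by (simp add: mat_tr_unitm)
  moreover have "u!i * (a!i * (?E * v!i)) \<in> carrier_mat ?d ?d" using mult_carrier_mat[OF U AEV] .
  ultimately show ?thesis
    unfolding gx_def tf_right[OF a i smult_carrier_mat[OF EV]]
    using dpos[OF i] by (simp add: mat_tr_smult[of _ ?d])
qed

lemma B_gy: assumes a: "a \<in> blk_carrier ds" and i: "i < length ds" and p: "p < ds!i" and q: "q < ds!i"
  shows "twisted_form ds u (gy i p q) a = of_nat (ds!i) * (a!i * u!i) $$ (p,q)"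
proof -
  let ?d = "ds!i" let ?E = "unitm ?d q p :: 'a mat"
  have A: "a!i \<in> carrier_mat ?d ?d" using blk_carrierD(2)[OF a i] .
  note U = uCi[OF i] and E = unitm_carrier[of ?d q p]
  have "mat_tr (u!i * (?E * a!i)) = mat_tr ((?E * a!i) * u!i)"
    using U mult_carrier_mat[OF E A] by (intro mat_tr_comm) auto
  moreover have "(?E * a!i) * u!i = ?E * (a!i * u!i)"
    using assoc_mult_mat[OF E A U] .
  moreover have "mat_tr (?E * (a!i * u!i)) = (a!i * u!i) $$ (p,q)"
    using A U p q by (intro mat_tr_unitm) auto
  ultimately show ?thesis
    unfolding gy_def tf_left[OF a i E] by simp
qed

definition Lidx :: "(nat \<times> nat \<times> nat) list" where
  "Lidx = concat (map (\<lambda>i. concat (map (\<lambda>p. map (\<lambda>q. (i,p,q)) [0..<ds!i]) [0..<ds!i])) [0..<length ds])"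

lemma sumL: "(\<Sum>x\<leftarrow>Lidx. G x) = (\<Sum>i<length ds. \<Sum>p<ds!i. \<Sum>q<ds!i. G (i,p,q))"
  unfolding Lidx_def
  by (simp add: sum_list_concat' map_concat o_def interv_sum_list_conv_sum_set_nat atLeast0LessThan)

lemma triple_delta: "j < length ds \<Longrightarrow>
  (\<Sum>i<length ds. \<Sum>p<ds!i. \<Sum>q<ds!i. if i = j then F p q else 0) = (\<Sum>p<ds!j. \<Sum>q<ds!j. F p q)"
proof -
  assume j: "j < length ds"
  have "(\<Sum>i<length ds. \<Sum>p<ds!i. \<Sum>q<ds!i. if i = j then F p q else 0)
      = (\<Sum>i<length ds. if i = j then (\<Sum>p<ds!j. \<Sum>q<ds!j. F p q) else 0)"
    by (rule sum.cong) auto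
  also have "\<dots> = (\<Sum>p<ds!j. \<Sum>q<ds!j. F p q)" using j by simp
  finally show ?thesis .
qed

definition g0 :: "('a mat list \<times> 'a mat list) list" where
  "g0 = map (\<lambda>(i,p,q). (gx i p q, gy i p q)) Lidx"

lemma Lidx_set: "x \<in> set Lidx \<Longrightarrow> fst x < length ds \<and> fst (snd x) < ds ! fst x \<and> snd (snd x) < ds ! fst x"
  unfolding Lidx_def by auto

lemma g0_carr: "\<forall>(x, y)\<in>set g0. x \<in> blk_carrier ds \<and> y \<in> blk_carrier ds"
    unfolding g0_def using Lidx_set gx_carrier gy_carrier by fastforce

lemma g0_id: assumes a: "a \<in> blk_carrier ds"
  shows "blk_sum ds (map (\<lambda>(x, y). blk_smult (twisted_form ds u a x) y) g0) = a \<and>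
        blk_sum ds (map (\<lambda>(x, y). blk_smult (twisted_form ds u y a) x) g0) = a"
proof (intro conjI)
  let ?W1 = "map (\<lambda>(x, y). blk_smult (twisted_form ds u a x) y) g0"
  have W1C: "set ?W1 \<subseteq> blk_carrier ds"
    unfolding g0_def using Lidx_set gy_carrier by (fastforce intro!: blk_smult_carrier)
  show "blk_sum ds ?W1 = a"
  proof (rule blk_eqI[OF conjunct1[OF blk_sum_carrier_nth[OF W1C]] a])
    fix j s t assume j: "j < length ds" and s: "s < ds!j" and t: "t < ds!j"
    have "blk_sum ds ?W1 ! j $$ (s,t) = (\<Sum>x\<leftarrow>Lidx. (case x of (i,p,q) \<Rightarrow> blk_smult (twisted_form ds u a (gx i p q)) (gy i p q)) ! j $$ (s,t))"
      using conjunct2[OF blk_sum_carrier_nth[OF W1C]] j s t unfolding g0_def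
      by (simp add: o_def split_def)
    also have "\<dots> = (\<Sum>i<length ds. \<Sum>p<ds!i. \<Sum>q<ds!i. blk_smult (twisted_form ds u a (gx i p q)) (gy i p q) ! j $$ (s,t))"
      by (simp add: sumL)
    also have "\<dots> = (\<Sum>i<length ds. \<Sum>p<ds!i. \<Sum>q<ds!i. if i = j then (if p = t then (if q = s then a!j $$ (s,t) else 0) else 0) else 0)"
      apply (intro sum.cong refl)
      subgoal for i p q
        using j s t gy_carrier[of i p q]
        by (auto simp: blk_smult_nth B_gx[OF a] gy_def blkE_nth unitm_index unitm_dims)
      done
    also have "\<dots> = a!j $$ (s,t)" using j s t by (simp add: triple_delta double_delta)
    finally show "blk_sum ds ?W1 ! j $$ (s,t) = a!j $$ (s,t)" .
  qed
  let ?W2 = "map (\<lambda>(x, y). blk_smult (twisted_form ds u y a) x) g0"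
  have W2C: "set ?W2 \<subseteq> blk_carrier ds"
    unfolding g0_def using Lidx_set gx_carrier by (fastforce intro!: blk_smult_carrier)
  show "blk_sum ds ?W2 = a"
  proof (rule blk_eqI[OF conjunct1[OF blk_sum_carrier_nth[OF W2C]] a])
    fix j s t assume j: "j < length ds" and s: "s < ds!j" and t: "t < ds!j"
    have A: "a!j \<in> carrier_mat (ds!j) (ds!j)" using blk_carrierD(2)[OF a j] .
    note U = uCi[OF j] and V = vCi[OF j]
    have "blk_sum ds ?W2 ! j $$ (s,t) = (\<Sum>x\<leftarrow>Lidx. (case x of (i,p,q) \<Rightarrow> blk_smult (twisted_form ds u (gy i p q) a) (gx i p q)) ! j $$ (s,t))"
      using conjunct2[OF blk_sum_carrier_nth[OF W2C]] j s t unfolding g0_def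
      by (simp add: o_def split_def)
    also have "\<dots> = (\<Sum>i<length ds. \<Sum>p<ds!i. \<Sum>q<ds!i. blk_smult (twisted_form ds u (gy i p q) a) (gx i p q) ! j $$ (s,t))"
      by (simp add: sumL)
    also have "\<dots> = (\<Sum>i<length ds. \<Sum>p<ds!i. \<Sum>q<ds!i. if i = j then (if p = s then (a!j * u!j) $$ (s,q) * v!j $$ (q,t) else 0) else 0)"
      apply (intro sum.cong refl)
      subgoal for i p q
        using j s t gx_carrier[of i p q] dpos[OF j] vCi[OF j]
        by (auto simp: blk_smult_nth B_gy[OF a] gx_def blkE_nth unitm_mult_smult2_entry)
      done
    also have "\<dots> = (\<Sum>q<ds!j. (a!j * u!j) $$ (s,q) * v!j $$ (q,t))" using j s t by (simp add: triple_delta double_delta2)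
    also have "\<dots> = ((a!j * u!j) * v!j) $$ (s,t)"
      using mult_entry[OF mult_carrier_mat[OF A U] V s t] by simp
    also have "(a!j * u!j) * v!j = a!j" using A U V uv[OF j] by simp
    finally show "blk_sum ds ?W2 ! j $$ (s,t) = a!j $$ (s,t)" .
  qed
qed

lemma g0_copairing: "is_copairing ds (twisted_form ds u) g0"
  unfolding is_copairing_def using g0_carr g0_id by blast


lemma ell_pow: assumes cp: "is_copairing ds (twisted_form ds u) g"
  shows "blk_pow ds (copairing_ell ds g) j = map (\<lambda>i. (cdg ds v i ^ j) \<cdot>\<^sub>m 1\<^sub>m (ds!i)) [0..<length ds]"
  unfolding ell_eq[OF cp] cdg_def[symmetric] by (rule pow_diag)

lemma F_dim_eq: assumes cp: "is_copairing ds (twisted_form ds u) g"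
  shows "F_dim ds (twisted_form ds u) g j = (\<Sum>i<length ds. of_nat (ds!i) * mat_tr (u!i) * cdg ds v i ^ j)"
proof -
  have PC: "map (\<lambda>i. (cdg ds v i ^ j) \<cdot>\<^sub>m 1\<^sub>m (ds!i)) [0..<length ds] \<in> blk_carrier ds"
    by (auto simp: blk_carrier_def)
  show ?thesis
    unfolding F_dim_def ell_pow[OF cp] tf_expand[OF blk_one_carrier PC]
  proof (rule sum.cong[OF refl])
    fix i assume "i \<in> {..<length ds}" then have i: "i < length ds" by simp
    have "u!i * (1\<^sub>m (ds!i) * ((cdg ds v i ^ j) \<cdot>\<^sub>m 1\<^sub>m (ds!i))) = (cdg ds v i ^ j) \<cdot>\<^sub>m u!i"
      using uCi[OF i] by (intro eq_matI) auto
    then show "of_nat (ds!i) * mat_tr (u!i * (blk_one ds ! i * map (\<lambda>i. (cdg ds v i ^ j) \<cdot>\<^sub>m 1\<^sub>m (ds!i)) [0..<length ds] ! i))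
      = of_nat (ds!i) * mat_tr (u!i) * cdg ds v i ^ j"
      using i uCi[OF i] by (simp add: blk_one_nth mat_tr_smult[of _ "ds!i"])
  qed
qed

lemma quasi_iff: assumes cp: "is_copairing ds (twisted_form ds u) g"
  shows "quasispecial ds g lam \<longleftrightarrow> lam \<noteq> 0 \<and> (\<forall>i<length ds. cdg ds v i = lam)"
proof -
  have "copairing_ell ds g = blk_smult lam (blk_one ds) \<longleftrightarrow> (\<forall>i<length ds. cdg ds v i = lam)"
  proof -
    have "copairing_ell ds g = blk_smult lam (blk_one ds) \<longleftrightarrow>
       (\<forall>i<length ds. cdg ds v i \<cdot>\<^sub>m 1\<^sub>m (ds!i) = lam \<cdot>\<^sub>m (1\<^sub>m (ds!i) :: 'a mat))"
      unfolding ell_eq[OF cp] cdg_def[symmetric] blk_smult_def blk_one_def map_map o_def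
      by (rule map_upt_eq)
    also have "\<dots> \<longleftrightarrow> (\<forall>i<length ds. cdg ds v i = lam)"
    proof (intro iffI allI impI)
      fix i assume H: "\<forall>i<length ds. cdg ds v i \<cdot>\<^sub>m 1\<^sub>m (ds!i) = lam \<cdot>\<^sub>m (1\<^sub>m (ds!i) :: 'a mat)" and i: "i < length ds"
      have "0 < ds!i" using pos i by auto
      then show "cdg ds v i = lam" using arg_cong[OF H[rule_format, OF i], of "\<lambda>M. M $$ (0,0)"] by simp
    qed simp
    finally show ?thesis .
  qed
  then show ?thesis unfolding quasispecial_def by blast
qed

end


theorem mainTheorem4:
  fixes ds :: "nat list" and u v :: "'a::field_char_0 mat list"
  assumes "ds \<noteq> []" and "\<forall>d \<in> set ds. 0 < d"
    and "u \<in> blk_carrier ds" and "v \<in> blk_carrier ds"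
    and "blk_mult u v = blk_one ds" and "blk_mult v u = blk_one ds"
  shows "(\<exists>g. is_copairing ds (twisted_form ds u) g) \<and>
    (\<forall>g. is_copairing ds (twisted_form ds u) g \<longrightarrow>
      F_dim ds (twisted_form ds u) g 1 =
        (\<Sum>i<length ds. mat_tr (u ! i) * mat_tr (v ! i)) \<and>
      F_hilbert ds (twisted_form ds u) g =
        (\<Sum>i<length ds. fps_const (of_nat (ds ! i) * mat_tr (u ! i)) *
           inverse (1 - fps_const (mat_tr (v ! i) / of_nat (ds ! i)) * fps_X)) \<and>
      F_dim ds (twisted_form ds u) g 0 =
        (\<Sum>i<length ds. of_nat (ds ! i) * mat_tr (u ! i)) \<and>
      (\<forall>lam. quasispecial ds g lam \<longleftrightarrow>
         lam \<noteq> 0 \<and> (\<forall>i<length ds. mat_tr (v ! i) / of_nat (ds ! i) = lam)))"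
proof (intro conjI allI impI)
  note H = assms(2-6)
  show "\<exists>g. is_copairing ds (twisted_form ds u) g"
    using g0_copairing[OF H] by blast
  fix g assume cp: "is_copairing ds (twisted_form ds u) g"
  note FD = F_dim_eq[OF H cp]
  show "F_dim ds (twisted_form ds u) g 1 = (\<Sum>i<length ds. mat_tr (u ! i) * mat_tr (v ! i))"
    unfolding FD
  proof (rule sum.cong[OF refl])
    fix i assume "i \<in> {..<length ds}"
    then have "(of_nat (ds!i) :: 'a) \<noteq> 0" using dpos[OF H] by simp
    then show "of_nat (ds!i) * mat_tr (u!i) * cdg ds v i ^ 1 = mat_tr (u ! i) * mat_tr (v ! i)"
      unfolding cdg_def by simp
  qed
  show "F_dim ds (twisted_form ds u) g 0 = (\<Sum>i<length ds. of_nat (ds ! i) * mat_tr (u ! i))"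
    unfolding FD by simp
  show "quasispecial ds g lam \<longleftrightarrow>
         lam \<noteq> 0 \<and> (\<forall>i<length ds. mat_tr (v ! i) / of_nat (ds ! i) = lam)" for lam
    using quasi_iff[OF H cp] by (simp add: cdg_def)
  show "F_hilbert ds (twisted_form ds u) g =
        (\<Sum>i<length ds. fps_const (of_nat (ds ! i) * mat_tr (u ! i)) *
           inverse (1 - fps_const (mat_tr (v ! i) / of_nat (ds ! i)) * fps_X))"
    unfolding F_hilbert_def fps_geom_inv
  proof (rule fps_ext)
    fix n
    have "fps_nth (\<Sum>i<length ds. fps_const (of_nat (ds ! i) * mat_tr (u ! i)) *
           Abs_fps (\<lambda>n. (mat_tr (v ! i) / of_nat (ds ! i)) ^ n)) n
       = (\<Sum>i<length ds. of_nat (ds ! i) * mat_tr (u ! i) * (mat_tr (v ! i) / of_nat (ds ! i)) ^ n)"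
      unfolding fps_sum_nth fps_mult_left_const_nth by simp
    also have "\<dots> = F_dim ds (twisted_form ds u) g n" unfolding FD cdg_def ..
    finally show "fps_nth (Abs_fps (F_dim ds (twisted_form ds u) g)) n = fps_nth (\<Sum>i<length ds. fps_const (of_nat (ds ! i) * mat_tr (u ! i)) *
           Abs_fps (\<lambda>n. (mat_tr (v ! i) / of_nat (ds ! i)) ^ n)) n" by simp
  qed
qed

end
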